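(* Let $\mathbb{S}\in\mathbb{Z}^{N_X\times N_e}$, $\mathcal{X}=\mathbb{R}^{N_X}_{>0}$, $\Phi$ a primal thermodynamic function on $\mathcal{X}$ with Legendre conjugate $\Phi^*$, $\tilde{x}\in\mathcal{X}$, and $\{\Psi^*_x\}_{x\in\mathcal{X}}$ a family of dissipation functions on $\mathbb{R}^{N_e}$. Consider the equilibrium flow $$\dot{x}=-\mathbb{S}\,\nabla\Psi^*_x\Big(\mathbb{S}^T\big(\nabla\Phi(x)-\nabla\Phi(\tilde{x})\big)\Big)$$ with initial state $x(0)=x_0\in\mathcal{X}$, flux $j(x)=\nabla\Psi^*_x(\mathbb{S}^T(\nabla\Phi(x)-\nabla\Phi(\tilde x)))$. Define $\mathcal{P}^{sc}(x_0):=\{x\in\mathcal{X}:x-x_0\in\mathrm{Im}\,\mathbb{S}\}$ (the set in which the trajectory from $x_0$ stays), $\mathcal{M}^{eq}(\tilde{x}):=\{x\in\mathcal{X}:\nabla\Phi(x)-\nabla\Phi(\tilde{x})\in\mathrm{Ker}\,\mathbb{S}^T\}$, and $\mathcal{M}^{\mathrm{DB}}:=\{x\in\mathcal{X}:j(x)=0\}$. Then the steady state $x_{eq}$ of the flow started from $x_0$ (the equilibrium state) is the point $x^\dagger$ forming the intersection $\mathcal{P}^{sc}(x_0)\cap\mathcal{M}^{eq}(\tilde{x})$; hence it exists and is unique for each pair $(x_0,\tilde{x})$. Moreover, $$x_{eq}=\arg\min_{x\in\mathcal{P}^{sc}(x_0)}\mathcal{D}_\Phi[x\|\tilde{x}]=\arg\min_{x_q\in\mathcal{M}^{eq}(\tilde{x})}\mathcal{D}_\Phi[x_0\|x_q],$$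 and $\mathcal{M}^{eq}(\tilde{x})=\mathcal{M}^{\mathrm{DB}}$.
   Context: A primal thermodynamic function is a strictly convex differentiable $\Phi:\mathcal{X}\to\mathbb{R}$ such that $\{\nabla\Phi(x):x\in\mathcal{X}\}=\mathbb{R}^{N_X}$ and, for every $x_{in}\in\mathcal{X}$ and $x_{bd}\in\mathbb{R}^{N_X}_{\ge0}\setminus\mathcal{X}$, $\lim_{\lambda\to0^+}\frac{d}{d\lambda}\Phi(\lambda x_{in}+(1-\lambda)x_{bd})=-\infty$. $\Phi^*(y)=\max_{x\in\mathcal{X}}[\langle x,y\rangle-\Phi(x)]$ on $\mathbb{R}^{N_X}$, and $\nabla\Phi,\nabla\Phi^*$ are mutually inverse bijections between $\mathcal{X}$ and $\mathbb{R}^{N_X}$. The Bregman divergence is $\mathcal{D}_\Phi[x\|x']=\Phi(x)-\Phi(x')-\langle x-x',\nabla\Phi(x')\rangle$. A dissipation function on $\mathbb{R}^{N_e}$ is a strictly convex, continuously differentiable, $1$-coercive ($\psi(f)/\|f\|\to\infty$), even function $\psi$ with $\psi(0)=0$. A steady state is a point where $\dot{x}=0$. *)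

theory Defs
  imports "HOL-Analysis.Analysis"
begin

definition pos_orthant :: "(real^'n) set" where
  "pos_orthant = {x. \<forall>i. x $ i > 0}"

definition strictly_convex_on :: "'a::real_vector set \<Rightarrow> ('a \<Rightarrow> real) \<Rightarrow> bool" where
  "strictly_convex_on S f \<longleftrightarrow> convex S \<and>
     (\<forall>x\<in>S. \<forall>y\<in>S. x \<noteq> y \<longrightarrow> (\<forall>t::real. 0 < t \<and> t < 1 \<longrightarrow>
        f (t *\<^sub>R x + (1 - t) *\<^sub>R y) < t * f x + (1 - t) * f y))"

definition primal_thermodynamic ::
  "(real^'n \<Rightarrow> real) \<Rightarrow> (real^'n \<Rightarrow> real^'n) \<Rightarrow> bool" where
  "primal_thermodynamic Phi gPhi \<longleftrightarrow>
     strictly_convex_on pos_orthant Phi \<and>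
     (\<forall>x\<in>pos_orthant. GDERIV Phi x :> gPhi x) \<and>
     gPhi ` pos_orthant = UNIV \<and>
     (\<forall>xin\<in>pos_orthant. \<forall>xbd. (\<forall>i. xbd $ i \<ge> 0) \<and> xbd \<notin> pos_orthant \<longrightarrow>
        filterlim (\<lambda>l. deriv (\<lambda>s. Phi (s *\<^sub>R xin + (1 - s) *\<^sub>R xbd)) l) at_bot (at_right 0))"

definition legendre_conj :: "(real^'n \<Rightarrow> real) \<Rightarrow> real^'n \<Rightarrow> real" where
  "legendre_conj Phi y = (SUP x\<in>pos_orthant. x \<bullet> y - Phi x)"

definition dissipation_function ::
  "('e::euclidean_space \<Rightarrow> real) \<Rightarrow> ('e \<Rightarrow> 'e) \<Rightarrow> bool" where
  "dissipation_function psi gpsi \<longleftrightarrow>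
     strictly_convex_on UNIV psi \<and>
     (\<forall>f. GDERIV psi f :> gpsi f) \<and> continuous_on UNIV gpsi \<and>
     filterlim (\<lambda>f. psi f / norm f) at_top at_infinity \<and>
     (\<forall>f. psi (- f) = psi f) \<and> psi 0 = 0"

definition bregman ::
  "(real^'n \<Rightarrow> real) \<Rightarrow> (real^'n \<Rightarrow> real^'n) \<Rightarrow> real^'n \<Rightarrow> real^'n \<Rightarrow> real" where
  "bregman Phi gPhi x x' = Phi x - Phi x' - (x - x') \<bullet> gPhi x'"

definition Psc :: "real^'e^'n \<Rightarrow> real^'n \<Rightarrow> (real^'n) set" where
  "Psc S x0 = {x \<in> pos_orthant. x - x0 \<in> range (\<lambda>v. S *v v)}"

definition Meq :: "real^'e^'n \<Rightarrow> (real^'n \<Rightarrow> real^'n) \<Rightarrow> real^'n \<Rightarrow> (real^'n) set" where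
  "Meq S gPhi xt = {x \<in> pos_orthant. transpose S *v (gPhi x - gPhi xt) = 0}"

definition flux :: "real^'e^'n \<Rightarrow> (real^'n \<Rightarrow> real^'n) \<Rightarrow> (real^'n \<Rightarrow> real^'e \<Rightarrow> real^'e)
     \<Rightarrow> real^'n \<Rightarrow> real^'n \<Rightarrow> real^'e" where
  "flux S gPhi gPsi xt x = gPsi x (transpose S *v (gPhi x - gPhi xt))"

definition eq_flow_rhs :: "real^'e^'n \<Rightarrow> (real^'n \<Rightarrow> real^'n) \<Rightarrow> (real^'n \<Rightarrow> real^'e \<Rightarrow> real^'e)
     \<Rightarrow> real^'n \<Rightarrow> real^'n \<Rightarrow> real^'n" where
  "eq_flow_rhs S gPhi gPsi xt x = - (S *v flux S gPhi gPsi xt x)"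

definition MDB :: "real^'e^'n \<Rightarrow> (real^'n \<Rightarrow> real^'n) \<Rightarrow> (real^'n \<Rightarrow> real^'e \<Rightarrow> real^'e)
     \<Rightarrow> real^'n \<Rightarrow> (real^'n) set" where
  "MDB S gPhi gPsi xt = {x \<in> pos_orthant. flux S gPhi gPsi xt x = 0}"

end

theory Submission
  imports Defs
begin

lemma gderiv_line:
  fixes f :: "'a::real_inner \<Rightarrow> real"
  assumes "GDERIV f (x + t *\<^sub>R v) :> D"
  shows "((\<lambda>s. f (x + s *\<^sub>R v)) has_real_derivative (v \<bullet> D)) (at t)"
proof -
  have l: "((\<lambda>s. x + s *\<^sub>R v) has_derivative (\<lambda>h. h *\<^sub>R v)) (at t)"
    by (auto intro!: derivative_eq_intros)
  have "((\<lambda>s. f (x + s *\<^sub>R v)) has_derivative (\<lambda>h. (h *\<^sub>R v) \<bullet> D)) (at t)"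
    using has_derivative_compose[OF l assms[unfolded gderiv_def]] by (simp add: o_def)
  moreover have "(\<lambda>h. (h *\<^sub>R v) \<bullet> D) = (*) (v \<bullet> D)" by (auto simp: fun_eq_iff)
  ultimately show ?thesis unfolding has_field_derivative_def by simp
qed

lemma tangent_ineq:
  fixes f :: "'a::real_inner \<Rightarrow> real"
  assumes sc: "strictly_convex_on S f" and xS: "x \<in> S" and yS: "y \<in> S"
    and D: "GDERIV f x :> D"
  shows "f x + (y - x) \<bullet> D \<le> f y"
proof (cases "x = y")
  case True then show ?thesis by simp
next
  case False
  define h where "h s = f (x + s *\<^sub>R (y - x))" for s
  have hd: "(h has_real_derivative ((y - x) \<bullet> D)) (at 0)"
    unfolding h_def by (rule gderiv_line) (use D in simp)
  have lim: "((\<lambda>s. (h s - h 0) / (s - 0)) \<longlongrightarrow> (y - x) \<bullet> D) (at_right 0)"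
    using hd unfolding has_field_derivative_iff by (rule tendsto_mono[OF at_le, rotated]) simp
  have ev: "eventually (\<lambda>s. (h s - h 0) / (s - 0) \<le> f y - f x) (at_right 0)"
    using eventually_at_right_real[of 0 1, OF zero_less_one]
  proof (rule eventually_mono)
    fix s :: real assume s: "s \<in> {0<..<1}"
    have "x + s *\<^sub>R (y - x) = s *\<^sub>R y + (1 - s) *\<^sub>R x" by (simp add: algebra_simps)
    then have "h s < s * f y + (1 - s) * f x"
      using sc xS yS s False unfolding strictly_convex_on_def h_def by auto
    then have "h s - h 0 \<le> s * (f y - f x)" by (simp add: h_def algebra_simps)
    then show "(h s - h 0) / (s - 0) \<le> f y - f x" using s by (simp add: divide_simps mult.commute)
  qed
  have "(y - x) \<bullet> D \<le> f y - f x"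
    by (rule tendsto_le[OF trivial_limit_at_right_real tendsto_const lim ev])
  then show ?thesis by simp
qed

lemma tangent_strict:
  fixes f :: "'a::real_inner \<Rightarrow> real"
  assumes sc: "strictly_convex_on S f" and xS: "x \<in> S" and yS: "y \<in> S" and ne: "x \<noteq> y"
    and D: "GDERIV f x :> D"
  shows "f x + (y - x) \<bullet> D < f y"
proof -
  define m where "m = (1/2) *\<^sub>R y + (1 - 1/2) *\<^sub>R x"
  have cv: "convex S" using sc unfolding strictly_convex_on_def by auto
  have mS: "m \<in> S" unfolding m_def by (rule convexD[OF cv yS xS]) auto
  have H: "\<forall>x\<in>S. \<forall>y\<in>S. x \<noteq> y \<longrightarrow> (\<forall>t::real. 0 < t \<and> t < 1 \<longrightarrow>
        f (t *\<^sub>R x + (1 - t) *\<^sub>R y) < t * f x + (1 - t) * f y)"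
    using sc unfolding strictly_convex_on_def by blast
  have "f m < (1/2) * f y + (1 - 1/2) * f x"
    unfolding m_def using H[rule_format, OF yS xS, of "1/2"] ne by auto
  moreover have "f x + (m - x) \<bullet> D \<le> f m" by (rule tangent_ineq[OF sc xS mS D])
  moreover have "(1/2::real) *\<^sub>R x + (1/2) *\<^sub>R x = x"
    by (simp add: scaleR_add_left[symmetric])
  then have "m - x = (1/2) *\<^sub>R (y - x)" unfolding m_def by (simp add: algebra_simps)
  ultimately show ?thesis by (simp add: algebra_simps)
qed

lemma sconv_strict:
  assumes "strictly_convex_on S f" "x \<in> S" "y \<in> S" "x \<noteq> y" "0 < t" "t < 1"
  shows "f (t *\<^sub>R x + (1 - t) *\<^sub>R y) < t * f x + (1 - t) * f y"
  using assms unfolding strictly_convex_on_def by blast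

lemma sconv_le:
  fixes f :: "'a::real_vector \<Rightarrow> real"
  assumes sc: "strictly_convex_on S f" and xS: "x \<in> S" and yS: "y \<in> S" and t: "0 < t" "t < 1"
  shows "f (t *\<^sub>R x + (1 - t) *\<^sub>R y) \<le> t * f x + (1 - t) * f y"
proof (cases "x = y")
  case True
  have "t *\<^sub>R x + (1 - t) *\<^sub>R x = x" by (simp add: scaleR_add_left[symmetric])
  then show ?thesis using True by (simp add: algebra_simps)
next
  case False
  then show ?thesis using sconv_strict[OF sc xS yS False t] by simp
qed

lemma open_pos: "open (pos_orthant :: (real^'n) set)"
proof -
  have "pos_orthant = (\<Inter>i\<in>UNIV. {x::real^'n. x $ i > 0})" unfolding pos_orthant_def by auto
  also have "open \<dots>" by (rule open_INT) (auto intro: open_halfspace_component_gt_cart)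
  finally show ?thesis .
qed

lemma transp_inner: "(transpose A *v u) \<bullet> w = u \<bullet> (A *v (w::real^_))"
  by (simp add: dot_lmul_matrix)

lemma diss_nonneg:
  assumes "dissipation_function psi gpsi"
  shows "psi f \<ge> 0"
proof (cases "f = 0")
  case True then show ?thesis using assms unfolding dissipation_function_def by simp
next
  case False
  have sc: "strictly_convex_on UNIV psi" and ev: "psi (- f) = psi f" and z: "psi 0 = 0"
    using assms unfolding dissipation_function_def by auto
  have ne: "f \<noteq> - f"
  proof
    assume "f = - f"
    then have "f + f = 0" by (metis add.right_inverse)
    then have "2 *\<^sub>R f = 0" by (simp add: scaleR_2)
    then show False using False by simp
  qed
  have "psi ((1/2) *\<^sub>R f + (1 - 1/2) *\<^sub>R (- f)) < (1/2) * psi f + (1 - 1/2) * psi (-f)"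
    by (rule sconv_strict[OF sc _ _ ne]) auto
  moreover have "(1/2::real) *\<^sub>R f + (1 - 1/2) *\<^sub>R (- f) = 0" by simp
  ultimately show ?thesis using ev z by simp
qed

lemma diss_grad0:
  assumes "dissipation_function psi gpsi"
  shows "gpsi 0 = 0"
proof -
  have D: "GDERIV psi 0 :> gpsi 0" and z: "psi 0 = 0"
    using assms unfolding dissipation_function_def by auto
  define v where "v = gpsi 0"
  have "((\<lambda>s. psi (0 + s *\<^sub>R v)) has_real_derivative (v \<bullet> gpsi 0)) (at 0)"
    by (rule gderiv_line) (use D in simp)
  then have "v \<bullet> gpsi 0 = 0"
    by (rule DERIV_local_min[where d=1]) (use diss_nonneg[OF assms] z in auto)
  then show ?thesis unfolding v_def by simp
qed

lemma diss_pos: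
  assumes "dissipation_function psi gpsi" and "f \<noteq> 0"
  shows "f \<bullet> gpsi f > 0"
proof -
  have sc: "strictly_convex_on UNIV psi" and D: "GDERIV psi f :> gpsi f" and z: "psi 0 = 0"
    using assms unfolding dissipation_function_def by auto
  have "psi f + (0 - f) \<bullet> gpsi f < psi 0"
    by (rule tangent_strict[OF sc _ _ _ D]) (use assms in auto)
  then show ?thesis using diss_nonneg[OF assms(1), of f] z by (simp add: inner_diff_left)
qed

lemma bregman_nonneg:
  assumes "primal_thermodynamic Phi gPhi" "x \<in> pos_orthant" "p \<in> pos_orthant"
  shows "bregman Phi gPhi x p \<ge> 0"
proof -
  have sc: "strictly_convex_on pos_orthant Phi" and D: "GDERIV Phi p :> gPhi p"
    using assms unfolding primal_thermodynamic_def by auto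
  show ?thesis using tangent_ineq[OF sc assms(3) assms(2) D] unfolding bregman_def by simp
qed

lemma bregman_pos:
  assumes "primal_thermodynamic Phi gPhi" "x \<in> pos_orthant" "p \<in> pos_orthant" "x \<noteq> p"
  shows "bregman Phi gPhi x p > 0"
proof -
  have sc: "strictly_convex_on pos_orthant Phi" and D: "GDERIV Phi p :> gPhi p"
    using assms unfolding primal_thermodynamic_def by auto
  show ?thesis using tangent_strict[OF sc assms(3) assms(2) _ D] assms(4) unfolding bregman_def by simp
qed

lemma orth:
  assumes "a \<in> Psc S x0" "b \<in> Psc S x0" "c \<in> Meq S gPhi xt" "d \<in> Meq S gPhi xt"
  shows "(a - b) \<bullet> (gPhi c - gPhi d) = 0"
proof -
  obtain va vb where va: "a - x0 = S *v va" and vb: "b - x0 = S *v vb"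
    using assms(1,2) unfolding Psc_def by auto
  have "a - b = S *v (va - vb)" using va vb by (simp add: matrix_vector_mult_diff_distrib algebra_simps)
  moreover have "transpose S *v (gPhi c - gPhi d) = 0"
  proof -
    have "gPhi c - gPhi d = (gPhi c - gPhi xt) - (gPhi d - gPhi xt)" by simp
    moreover have "transpose S *v (gPhi c - gPhi xt) = 0" "transpose S *v (gPhi d - gPhi xt) = 0"
      using assms(3,4) unfolding Meq_def by auto
    ultimately show ?thesis by (simp add: matrix_vector_mult_diff_distrib)
  qed
  ultimately show ?thesis using transp_inner[of S "gPhi c - gPhi d" "va - vb"]
    by (simp add: inner_commute)
qed

lemma pyth:
  "bregman Phi gPhi x q = bregman Phi gPhi x p + bregman Phi gPhi p q + (x - p) \<bullet> (gPhi p - gPhi q)"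
  unfolding bregman_def by (simp add: algebra_simps inner_diff_left inner_diff_right)

lemma existence:
  fixes S :: "real^'e^'n" and Phi :: "real^'n \<Rightarrow> real" and gPhi :: "real^'n \<Rightarrow> real^'n"
  assumes pt: "primal_thermodynamic Phi gPhi" and xt: "xt \<in> pos_orthant" and x0: "x0 \<in> pos_orthant"
  shows "\<exists>xs. xs \<in> Psc S x0 \<and> xs \<in> Meq S gPhi xt"
proof -
  have sc: "strictly_convex_on pos_orthant Phi"
    and D: "\<And>x. x \<in> pos_orthant \<Longrightarrow> GDERIV Phi x :> gPhi x"
    and surj: "gPhi ` pos_orthant = UNIV"
    and steep: "\<And>xin xbd. xin \<in> pos_orthant \<Longrightarrow> (\<forall>i. xbd $ i \<ge> 0) \<Longrightarrow> xbd \<notin> pos_orthant \<Longrightarrow>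
        filterlim (\<lambda>l. deriv (\<lambda>s. Phi (s *\<^sub>R xin + (1 - s) *\<^sub>R xbd)) l) at_bot (at_right 0)"
    using pt unfolding primal_thermodynamic_def by auto
  define P where "P = Psc S x0"
  define f where "f x = Phi x - x \<bullet> gPhi xt" for x
  define R where "R = range (\<lambda>v. S *v v)"
  have subR: "subspace R" unfolding R_def
    by (rule linear_subspace_image[OF matrix_vector_mul_linear subspace_UNIV])
  have clR: "closed R" using subR by (rule closed_subspace)
  have P_iff: "\<And>x. x \<in> P \<longleftrightarrow> x \<in> pos_orthant \<and> x - x0 \<in> R"
    unfolding P_def Psc_def R_def by auto
  have x0P: "x0 \<in> P" using x0 subspace_0[OF subR] P_iff by simp
  have fcont: "\<And>x. x \<in> pos_orthant \<Longrightarrow> isCont f x"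
  proof -
    fix x :: "real^'n" assume x: "x \<in> pos_orthant"
    have "isCont Phi x" using D[OF x] unfolding gderiv_def by (rule has_derivative_continuous)
    then show "isCont f x" unfolding f_def by (intro continuous_intros)
  qed
  have fconv: "\<And>a b t. a \<in> pos_orthant \<Longrightarrow> b \<in> pos_orthant \<Longrightarrow> 0 < t \<Longrightarrow> t < 1 \<Longrightarrow>
      f (t *\<^sub>R a + (1 - t) *\<^sub>R b) \<le> t * f a + (1 - t) * f b"
  proof -
    fix a b :: "real^'n" and t :: real
    assume h: "a \<in> pos_orthant" "b \<in> pos_orthant" "0 < t" "t < 1"
    have "Phi (t *\<^sub>R a + (1 - t) *\<^sub>R b) \<le> t * Phi a + (1 - t) * Phi b"
      by (rule sconv_le[OF sc h])
    then show "f (t *\<^sub>R a + (1 - t) *\<^sub>R b) \<le> t * f a + (1 - t) * f b"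
      unfolding f_def by (simp add: inner_add_left algebra_simps)
  qed
  obtain z where z: "z \<in> pos_orthant" "gPhi z = gPhi xt + 1" using surj by (metis UNIV_I imageE)
  define c where "c = Phi z - z \<bullet> gPhi z"
  have lb: "\<And>x. x \<in> pos_orthant \<Longrightarrow> c + norm x \<le> f x"
  proof -
    fix x :: "real^'n" assume x: "x \<in> pos_orthant"
    have t: "Phi z + (x - z) \<bullet> gPhi z \<le> Phi x" by (rule tangent_ineq[OF sc z(1) x D[OF z(1)]])
    have "norm x \<le> (\<Sum>i\<in>UNIV. \<bar>x $ i\<bar>)" by (rule norm_le_l1_cart)
    also have "\<dots> = x \<bullet> 1"
      using x unfolding pos_orthant_def inner_vec_def by (intro sum.cong refl) (simp add: abs_of_pos)
    finally have "norm x \<le> x \<bullet> 1" .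
    then show "c + norm x \<le> f x" using t unfolding c_def f_def z(2)
      by (simp add: inner_diff_left inner_add_right)
  qed
  define m where "m = Inf (f ` P)"
  have bdd: "bdd_below (f ` P)"
  proof (rule bdd_belowI)
    fix y assume "y \<in> f ` P"
    then obtain x where "x \<in> P" "y = f x" by blast
    then show "c \<le> y" using lb[of x] P_iff by (smt (verit) norm_ge_zero)
  qed
  have mle: "\<And>x. x \<in> P \<Longrightarrow> m \<le> f x" unfolding m_def by (rule cInf_lower) (use bdd in auto)
  have "\<forall>k. \<exists>x\<in>P. f x < m + inverse (real (Suc k))"
  proof
    fix k
    have "f ` P \<noteq> {}" using x0P by auto
    moreover have "Inf (f ` P) < m + inverse (real (Suc k))" unfolding m_def by simp
    ultimately have "\<exists>y\<in>f ` P. y < m + inverse (real (Suc k))"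
      by (rule cInf_lessD)
    then obtain y where "y \<in> f ` P" "y < m + inverse (real (Suc k))" ..
    then show "\<exists>x\<in>P. f x < m + inverse (real (Suc k))" by blast
  qed
  then have "\<exists>X. \<forall>k. X k \<in> P \<and> f (X k) < m + inverse (real (Suc k))"
    by (intro choice) blast
  then obtain X where XX: "\<forall>k. X k \<in> P \<and> f (X k) < m + inverse (real (Suc k))" by blast
  have XP: "\<And>k. X k \<in> P" and Xf: "\<And>k. f (X k) < m + inverse (real (Suc k))" using XX by auto
  have Xb: "\<forall>k. X k \<in> cball 0 (f x0 + 1 - c)"
  proof
    fix k
    have "inverse (real (Suc k)) \<le> 1" by (simp add: field_simps)
    moreover have "c + norm (X k) \<le> f (X k)" using lb XP P_iff by blast
    moreover note Xf[of k] mle[OF x0P]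
    ultimately show "X k \<in> cball 0 (f x0 + 1 - c)" by simp
  qed
  obtain xs r where r: "strict_mono r" and Xr: "(X \<circ> r) \<longlonglongrightarrow> xs"
    using seq_compactE[OF compact_imp_seq_compact[OF compact_cball] Xb] by metis
  have Xr': "(\<lambda>k. X (r k)) \<longlonglongrightarrow> xs" using Xr by (simp add: o_def)
  have fX: "(\<lambda>k. f (X k)) \<longlonglongrightarrow> m"
  proof (rule real_tendsto_sandwich[where f="\<lambda>_. m" and h="\<lambda>k. m + inverse (real (Suc k))"])
    show "\<forall>\<^sub>F n in sequentially. m \<le> f (X n)" using mle XP by auto
    show "\<forall>\<^sub>F n in sequentially. f (X n) \<le> m + inverse (real (Suc n))" by (rule always_eventually) (use Xf less_imp_le in blast)
    show "(\<lambda>n. m) \<longlonglongrightarrow> m" by simp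
    show "(\<lambda>n. m + inverse (real (Suc n))) \<longlonglongrightarrow> m"
      using tendsto_add[OF tendsto_const LIMSEQ_inverse_real_of_nat, of m] by simp
  qed
  have fXr: "(\<lambda>k. f (X (r k))) \<longlonglongrightarrow> m" using LIMSEQ_subseq_LIMSEQ[OF fX r] by (simp add: o_def)
  have xsnn: "\<forall>i. 0 \<le> xs $ i"
  proof
    fix i
    have "(\<lambda>k. X (r k) $ i) \<longlonglongrightarrow> xs $ i" by (rule tendsto_vec_nth[OF Xr'])
    moreover have "\<forall>k. 0 \<le> X (r k) $ i" using XP P_iff unfolding pos_orthant_def by (auto intro: less_imp_le)
    ultimately show "0 \<le> xs $ i" by (intro LIMSEQ_le_const) auto
  qed
  have xsR: "xs - x0 \<in> R"
    by (rule closed_sequentially[OF clR, of "\<lambda>k. X (r k) - x0"]) (use XP P_iff Xr' in \<open>auto intro: tendsto_intros\<close>)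
  have key: "\<And>s. 0 < s \<Longrightarrow> s < 1 \<Longrightarrow> s *\<^sub>R x0 + (1 - s) *\<^sub>R xs \<in> P \<and>
               f (s *\<^sub>R x0 + (1 - s) *\<^sub>R xs) \<le> s * f x0 + (1 - s) * m"
  proof -
    fix s :: real assume s: "0 < s" "s < 1"
    let ?z = "s *\<^sub>R x0 + (1 - s) *\<^sub>R xs"
    have zpos: "?z \<in> pos_orthant" unfolding pos_orthant_def
    proof (safe)
      fix i
      have "0 < x0 $ i" using x0 unfolding pos_orthant_def by auto
      then have "0 < s * x0 $ i" using s by simp
      moreover have "0 \<le> (1 - s) * xs $ i" using s xsnn by simp
      ultimately show "0 < ?z $ i" by simp
    qed
    have "?z - x0 = (1 - s) *\<^sub>R (xs - x0)" by (simp add: algebra_simps)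
    then have "?z - x0 \<in> R" using subspace_scale[OF subR xsR] by simp
    then have zP: "?z \<in> P" using zpos P_iff by simp
    have lim: "(\<lambda>k. s *\<^sub>R x0 + (1 - s) *\<^sub>R X (r k)) \<longlonglongrightarrow> ?z"
      by (intro tendsto_intros Xr')
    have "(\<lambda>k. f (s *\<^sub>R x0 + (1 - s) *\<^sub>R X (r k))) \<longlonglongrightarrow> f ?z"
      by (rule isCont_tendsto_compose[OF fcont[OF zpos] lim])
    moreover have "(\<lambda>k. s * f x0 + (1 - s) * f (X (r k))) \<longlonglongrightarrow> s * f x0 + (1 - s) * m"
      by (intro tendsto_intros fXr)
    moreover have "\<forall>k. f (s *\<^sub>R x0 + (1 - s) *\<^sub>R X (r k)) \<le> s * f x0 + (1 - s) * f (X (r k))"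
      using fconv x0 XP P_iff s by blast
    ultimately have "f ?z \<le> s * f x0 + (1 - s) * m" by (intro LIMSEQ_le) auto
    then show "?z \<in> P \<and> f ?z \<le> s * f x0 + (1 - s) * m" using zP by simp
  qed
  have xspos: "xs \<in> pos_orthant"
  proof (rule ccontr)
    assume nxs: "xs \<notin> pos_orthant"
    define H where "H = (\<lambda>s. Phi (s *\<^sub>R x0 + (1 - s) *\<^sub>R xs))"
    have lim: "filterlim (\<lambda>l. deriv H l) at_bot (at_right 0)"
      using steep[OF x0 xsnn nxs] unfolding H_def .
    have Hd: "\<And>s. 0 < s \<Longrightarrow> s < 1 \<Longrightarrow> (H has_real_derivative ((x0 - xs) \<bullet> gPhi (s *\<^sub>R x0 + (1 - s) *\<^sub>R xs))) (at s)"
    proof -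
      fix s :: real assume s: "0 < s" "s < 1"
      have eq: "\<And>t. xs + t *\<^sub>R (x0 - xs) = t *\<^sub>R x0 + (1 - t) *\<^sub>R xs" by (simp add: algebra_simps)
      have "H = (\<lambda>t. Phi (xs + t *\<^sub>R (x0 - xs)))" unfolding H_def eq ..
      moreover have "GDERIV Phi (xs + s *\<^sub>R (x0 - xs)) :> gPhi (s *\<^sub>R x0 + (1 - s) *\<^sub>R xs)"
        unfolding eq using D key[OF s] P_iff by blast
      ultimately show "(H has_real_derivative ((x0 - xs) \<bullet> gPhi (s *\<^sub>R x0 + (1 - s) *\<^sub>R xs))) (at s)"
        using gderiv_line by metis
    qed
    define a where "a = xs \<bullet> gPhi xt"
    define Dd where "Dd = (x0 - xs) \<bullet> gPhi xt"
    define C where "C = f x0 - m + Dd"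
    have zdot: "\<And>s. (s *\<^sub>R x0 + (1 - s) *\<^sub>R xs) \<bullet> gPhi xt = a + s * Dd"
      unfolding a_def Dd_def by (simp add: inner_add_left inner_diff_left algebra_simps)
    have Hlo: "\<And>s. 0 < s \<Longrightarrow> s < 1 \<Longrightarrow> m + a + s * Dd \<le> H s"
    proof -
      fix s :: real assume s: "0 < s" "s < 1"
      have "m \<le> f (s *\<^sub>R x0 + (1 - s) *\<^sub>R xs)" using key[OF s] mle by blast
      then show "m + a + s * Dd \<le> H s" unfolding f_def H_def zdot by simp
    qed
    have Hup: "\<And>s. 0 < s \<Longrightarrow> s < 1 \<Longrightarrow> H s \<le> m + a + s * C"
    proof -
      fix s :: real assume s: "0 < s" "s < 1"
      have "f (s *\<^sub>R x0 + (1 - s) *\<^sub>R xs) \<le> s * f x0 + (1 - s) * m" using key[OF s] by blast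
      then show "H s \<le> m + a + s * C" unfolding f_def H_def zdot C_def by (simp add: algebra_simps)
    qed
    define K where "K = \<bar>Dd\<bar> + \<bar>C\<bar> + 1"
    from lim have "eventually (\<lambda>l. deriv H l \<le> -K) (at_right 0)" by (simp add: filterlim_at_bot)
    then obtain b :: real where b: "b > 0" "\<And>y. 0 < y \<Longrightarrow> y < b \<Longrightarrow> deriv H y \<le> -K"
      unfolding eventually_at_right_field by blast
    define s1 where "s1 = min b 1 / 2"
    have s1: "0 < s1" "s1 < 1" "s1 < b" unfolding s1_def using b by auto
    have CK: "C + K \<ge> 1" "Dd + K \<ge> 1" unfolding K_def by auto
    define s where "s = s1 / (2 * (C + K))"
    have pos2: "0 < 2 * (C + K)" using CK by simp
    have "s1 * 1 < s1 * (2 * (C + K))" using CK s1 by (intro mult_strict_left_mono) auto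
    then have s: "0 < s" "s < s1" unfolding s_def using s1 pos2
      by (auto simp: divide_less_eq)
    have s3: "s * (C + K) = s1 / 2" unfolding s_def using pos2 by (simp add: field_simps)
    have cont: "continuous_on {s..s1} H"
    proof (rule continuous_at_imp_continuous_on, rule ballI)
      fix x assume "x \<in> {s..s1}"
      then have "0 < x" "x < 1" using s s1 by auto
      then show "isCont H x" using Hd by (blast intro: DERIV_isCont)
    qed
    obtain l \<xi> where \<xi>: "s < \<xi>" "\<xi> < s1" "DERIV H \<xi> :> l" "H s1 - H s = (s1 - s) * l"
      using MVT[OF s(2) cont] Hd s s1 unfolding real_differentiable_def
      by (smt (verit, best))
    have "l = deriv H \<xi>" using \<xi>(3) by (simp add: DERIV_imp_deriv)
    then have lK: "l \<le> -K" using b(2)[of \<xi>] \<xi> s s1 by simp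
    have "(s1 - s) * l \<le> (s1 - s) * (-K)" using lK s by (intro mult_left_mono) auto
    then have "H s1 \<le> H s - (s1 - s) * K" using \<xi>(4) by simp
    moreover have "m + a + s1 * Dd \<le> H s1" using Hlo s1 by simp
    moreover have "H s \<le> m + a + s * C" using Hup s s1 by simp
    ultimately have "s1 * (Dd + K) \<le> s * (C + K)" by (simp add: algebra_simps)
    also have "\<dots> = s1 / 2" using s3 by simp
    finally have "s1 * (Dd + K) \<le> s1 / 2" .
    moreover have "s1 \<le> s1 * (Dd + K)" using CK s1 mult_left_mono[of 1 "Dd + K" s1] by simp
    ultimately show False using s1 by simp
  qed
  have fxs: "f xs = m"
    using LIMSEQ_unique[OF isCont_tendsto_compose[OF fcont[OF xspos] Xr'] fXr] .
  have xsP: "xs \<in> P" using xspos xsR P_iff by simp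
  define u where "u = gPhi xs - gPhi xt"
  define w where "w = transpose S *v u"
  define v where "v = S *v w"
  have vR: "v \<in> R" unfolding v_def R_def by simp
  obtain e where e: "e > 0" "ball xs e \<subseteq> pos_orthant"
    using open_pos xspos open_contains_ball by blast
  have fd: "((\<lambda>t. f (xs + t *\<^sub>R v)) has_real_derivative (v \<bullet> gPhi xs - v \<bullet> gPhi xt)) (at 0)"
  proof -
    have "((\<lambda>t. Phi (xs + t *\<^sub>R v)) has_real_derivative (v \<bullet> gPhi xs)) (at 0)"
      by (rule gderiv_line) (use D[OF xspos] in simp)
    moreover have "((\<lambda>t. (xs + t *\<^sub>R v) \<bullet> gPhi xt) has_real_derivative (v \<bullet> gPhi xt)) (at 0)"
    proof -
      have "(\<lambda>t. (xs + t *\<^sub>R v) \<bullet> gPhi xt) = (\<lambda>t. xs \<bullet> gPhi xt + t * (v \<bullet> gPhi xt))"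
        by (simp add: inner_add_left fun_eq_iff)
      moreover have "((\<lambda>t. xs \<bullet> gPhi xt + t * (v \<bullet> gPhi xt)) has_real_derivative (v \<bullet> gPhi xt)) (at 0)"
        by (auto intro!: derivative_eq_intros)
      ultimately show ?thesis by simp
    qed
    ultimately show ?thesis unfolding f_def by (rule DERIV_diff)
  qed
  have "v \<bullet> gPhi xs - v \<bullet> gPhi xt = 0"
  proof (rule DERIV_local_min[OF fd, of "e / (norm v + 1)"])
    show "0 < e / (norm v + 1)" using e by (simp add: add_nonneg_pos)
    show "\<forall>y. \<bar>0 - y\<bar> < e / (norm v + 1) \<longrightarrow> f (xs + 0 *\<^sub>R v) \<le> f (xs + y *\<^sub>R v)"
    proof (intro allI impI)
      fix y :: real assume y: "\<bar>0 - y\<bar> < e / (norm v + 1)"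
      have pos: "0 < norm v + 1" by (simp add: add_nonneg_pos)
      have "\<bar>y\<bar> < e / (norm v + 1)" using y by simp
      then have "\<bar>y\<bar> * (norm v + 1) < e" using pos_less_divide_eq[OF pos] by blast
      moreover have "\<bar>y\<bar> * norm v \<le> \<bar>y\<bar> * (norm v + 1)" by (simp add: mult_left_mono)
      ultimately have "norm (y *\<^sub>R v) < e" by simp
      then have "xs + y *\<^sub>R v \<in> pos_orthant" using e by (auto simp: dist_norm)
      moreover have "xs + y *\<^sub>R v - x0 \<in> R"
      proof -
        have "xs + y *\<^sub>R v - x0 = (xs - x0) + y *\<^sub>R v" by simp
        moreover have "(xs - x0) + y *\<^sub>R v \<in> R" using subspace_add[OF subR xsR subspace_scale[OF subR vR]] .
        ultimately show ?thesis by metis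
      qed
      ultimately have "xs + y *\<^sub>R v \<in> P" using P_iff by simp
      then show "f (xs + 0 *\<^sub>R v) \<le> f (xs + y *\<^sub>R v)" using mle fxs by simp
    qed
  qed
  then have "v \<bullet> u = 0" unfolding u_def by (simp add: inner_diff_right)
  have "(transpose S *v u) \<bullet> w = w \<bullet> w" by (simp only: w_def[symmetric])
  moreover have "(transpose S *v u) \<bullet> w = u \<bullet> (S *v w)" by (rule transp_inner)
  moreover have "u \<bullet> (S *v w) = v \<bullet> u" unfolding v_def by (simp only: inner_commute)
  ultimately have "w \<bullet> w = 0" using \<open>v \<bullet> u = 0\<close> by simp
  then have "w = 0" by simp
  then have "xs \<in> Meq S gPhi xt" unfolding Meq_def w_def u_def using xspos by simp
  then show ?thesis using xsP P_def by blast
qed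

theorem mainTheorem4:
  fixes S :: "real^'e^'n"
    and Phi :: "real^'n \<Rightarrow> real" and gPhi :: "real^'n \<Rightarrow> real^'n"
    and Psi :: "real^'n \<Rightarrow> real^'e \<Rightarrow> real" and gPsi :: "real^'n \<Rightarrow> real^'e \<Rightarrow> real^'e"
    and xt x0 :: "real^'n"
  assumes "\<forall>i j. S $ i $ j \<in> \<int>"
    and "primal_thermodynamic Phi gPhi"
    and "xt \<in> pos_orthant"
    and "\<forall>x\<in>pos_orthant. dissipation_function (Psi x) (gPsi x)"
    and "x0 \<in> pos_orthant"
  shows "\<exists>xeq.
           Psc S x0 \<inter> Meq S gPhi xt = {xeq} \<and>
           {x \<in> Psc S x0. eq_flow_rhs S gPhi gPsi xt x = 0} = {xeq} \<and>
           {x \<in> Psc S x0. \<forall>y \<in> Psc S x0. bregman Phi gPhi x xt \<le> bregman Phi gPhi y xt} = {xeq} \<and>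
           {q \<in> Meq S gPhi xt. \<forall>q' \<in> Meq S gPhi xt. bregman Phi gPhi x0 q \<le> bregman Phi gPhi x0 q'} = {xeq} \<and>
           Meq S gPhi xt = MDB S gPhi gPsi xt"
proof -
  note pt = assms(2)
  obtain xeq where xP: "xeq \<in> Psc S x0" and xM: "xeq \<in> Meq S gPhi xt"
    using existence[OF assms(2,3,5)] by blast
  have posP: "\<And>x. x \<in> Psc S x0 \<Longrightarrow> x \<in> pos_orthant" unfolding Psc_def by auto
  have posM: "\<And>x. x \<in> Meq S gPhi xt \<Longrightarrow> x \<in> pos_orthant" unfolding Meq_def by auto
  have uniq: "\<And>p. p \<in> Psc S x0 \<Longrightarrow> p \<in> Meq S gPhi xt \<Longrightarrow> p = xeq"
  proof (rule ccontr)
    fix p assume p: "p \<in> Psc S x0" "p \<in> Meq S gPhi xt" and ne: "p \<noteq> xeq"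
    have "(p - xeq) \<bullet> (gPhi p - gPhi xeq) = 0" by (rule orth[OF p(1) xP p(2) xM])
    moreover have "bregman Phi gPhi p xeq > 0" by (rule bregman_pos[OF pt posP[OF p(1)] posP[OF xP] ne])
    moreover have "bregman Phi gPhi xeq p > 0" using bregman_pos[OF pt posP[OF xP] posP[OF p(1)]] ne by auto
    moreover have "bregman Phi gPhi p xeq + bregman Phi gPhi xeq p = (p - xeq) \<bullet> (gPhi p - gPhi xeq)"
      unfolding bregman_def by (simp add: algebra_simps inner_diff_left inner_diff_right)
    ultimately show False by simp
  qed
  have c1: "Psc S x0 \<inter> Meq S gPhi xt = {xeq}" using uniq xP xM by blast
  have x0P: "x0 \<in> Psc S x0" unfolding Psc_def using assms(5)
    by (simp add: image_iff) (metis matrix_vector_mult_0_right)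
  have xtM: "xt \<in> Meq S gPhi xt" unfolding Meq_def using assms(3) by simp
  have c5: "Meq S gPhi xt = MDB S gPhi gPsi xt"
  proof (rule set_eqI)
    fix x
    show "x \<in> Meq S gPhi xt \<longleftrightarrow> x \<in> MDB S gPhi gPsi xt"
    proof (cases "x \<in> pos_orthant")
      case False then show ?thesis unfolding Meq_def MDB_def by simp
    next
      case True
      have d: "dissipation_function (Psi x) (gPsi x)" using assms(4) True by blast
      define f where "f = transpose S *v (gPhi x - gPhi xt)"
      have "f = 0 \<longleftrightarrow> gPsi x f = 0"
      proof
        assume "f = 0" then show "gPsi x f = 0" using diss_grad0[OF d] by simp
      next
        assume h: "gPsi x f = 0"
        show "f = 0"
        proof (rule ccontr)
          assume "f \<noteq> 0"
          then have "f \<bullet> gPsi x f > 0" by (rule diss_pos[OF d])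
          then show False using h by simp
        qed
      qed
      then show ?thesis unfolding Meq_def MDB_def flux_def f_def using True by simp
    qed
  qed
  have c2: "{x \<in> Psc S x0. eq_flow_rhs S gPhi gPsi xt x = 0} = {xeq}"
  proof (rule set_eqI, rule iffI)
    fix x assume "x \<in> {x \<in> Psc S x0. eq_flow_rhs S gPhi gPsi xt x = 0}"
    then have xP': "x \<in> Psc S x0" and r: "eq_flow_rhs S gPhi gPsi xt x = 0" by auto
    have d: "dissipation_function (Psi x) (gPsi x)" using assms(4) posP[OF xP'] by blast
    define u where "u = gPhi x - gPhi xt"
    define f where "f = transpose S *v u"
    have Sj: "S *v gPsi x f = 0" using r unfolding eq_flow_rhs_def flux_def f_def u_def by simp
    have "f \<bullet> gPsi x f = u \<bullet> (S *v gPsi x f)" unfolding f_def by (rule transp_inner)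
    then have "f \<bullet> gPsi x f = 0" using Sj by simp
    then have "f = 0" using diss_pos[OF d] by force
    then have "x \<in> Meq S gPhi xt" unfolding Meq_def f_def u_def using posP[OF xP'] by simp
    then show "x \<in> {xeq}" using uniq xP' by simp
  next
    fix x assume "x \<in> {xeq}"
    then have x: "x = xeq" by simp
    have d: "dissipation_function (Psi xeq) (gPsi xeq)" using assms(4) posP[OF xP] by blast
    have "transpose S *v (gPhi xeq - gPhi xt) = 0" using xM unfolding Meq_def by simp
    then have "eq_flow_rhs S gPhi gPsi xt xeq = 0"
      unfolding eq_flow_rhs_def flux_def using diss_grad0[OF d] by simp
    then show "x \<in> {x \<in> Psc S x0. eq_flow_rhs S gPhi gPsi xt x = 0}" using x xP by simp
  qed
  have py1: "\<And>x. x \<in> Psc S x0 \<Longrightarrow> bregman Phi gPhi x xt = bregman Phi gPhi x xeq + bregman Phi gPhi xeq xt"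
  proof -
    fix x assume x: "x \<in> Psc S x0"
    have "(x - xeq) \<bullet> (gPhi xeq - gPhi xt) = 0" by (rule orth[OF x xP xM xtM])
    then show "?thesis x" using pyth[of Phi gPhi x xt xeq] by simp
  qed
  have c3: "{x \<in> Psc S x0. \<forall>y \<in> Psc S x0. bregman Phi gPhi x xt \<le> bregman Phi gPhi y xt} = {xeq}"
  proof (rule set_eqI, rule iffI)
    fix x assume "x \<in> {x \<in> Psc S x0. \<forall>y \<in> Psc S x0. bregman Phi gPhi x xt \<le> bregman Phi gPhi y xt}"
    then have x: "x \<in> Psc S x0" and le: "bregman Phi gPhi x xt \<le> bregman Phi gPhi xeq xt" using xP by auto
    have "bregman Phi gPhi x xeq \<le> 0" using le py1[OF x] by simp
    then have "x = xeq" using bregman_pos[OF pt posP[OF x] posP[OF xP]] by force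
    then show "x \<in> {xeq}" by simp
  next
    fix x assume "x \<in> {xeq}"
    then have x: "x = xeq" by simp
    have "\<forall>y \<in> Psc S x0. bregman Phi gPhi xeq xt \<le> bregman Phi gPhi y xt"
      using py1 bregman_nonneg[OF pt] posP xP by (metis le_add_same_cancel2)
    then show "x \<in> {x \<in> Psc S x0. \<forall>y \<in> Psc S x0. bregman Phi gPhi x xt \<le> bregman Phi gPhi y xt}"
      using x xP by simp
  qed
  have py2: "\<And>q. q \<in> Meq S gPhi xt \<Longrightarrow> bregman Phi gPhi x0 q = bregman Phi gPhi x0 xeq + bregman Phi gPhi xeq q"
  proof -
    fix q assume q: "q \<in> Meq S gPhi xt"
    have "(x0 - xeq) \<bullet> (gPhi xeq - gPhi q) = 0" by (rule orth[OF x0P xP xM q])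
    then show "?thesis q" using pyth[of Phi gPhi x0 q xeq] by simp
  qed
  have c4: "{q \<in> Meq S gPhi xt. \<forall>q' \<in> Meq S gPhi xt. bregman Phi gPhi x0 q \<le> bregman Phi gPhi x0 q'} = {xeq}"
  proof (rule set_eqI, rule iffI)
    fix q assume "q \<in> {q \<in> Meq S gPhi xt. \<forall>q' \<in> Meq S gPhi xt. bregman Phi gPhi x0 q \<le> bregman Phi gPhi x0 q'}"
    then have q: "q \<in> Meq S gPhi xt" and le: "bregman Phi gPhi x0 q \<le> bregman Phi gPhi x0 xeq" using xM by auto
    have "bregman Phi gPhi xeq q \<le> 0" using le py2[OF q] by simp
    then have "q = xeq" using bregman_pos[OF pt posP[OF xP] posM[OF q]] by force
    then show "q \<in> {xeq}" by simp
  next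
    fix q assume "q \<in> {xeq}"
    then have q: "q = xeq" by simp
    have "\<forall>q' \<in> Meq S gPhi xt. bregman Phi gPhi x0 xeq \<le> bregman Phi gPhi x0 q'"
      using py2 bregman_nonneg[OF pt] posM posP xP by (metis le_add_same_cancel1)
    then show "q \<in> {q \<in> Meq S gPhi xt. \<forall>q' \<in> Meq S gPhi xt. bregman Phi gPhi x0 q \<le> bregman Phi gPhi x0 q'}"
      using q xM by simp
  qed
  show ?thesis using c1 c2 c3 c4 c5 by blast
qed

end
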